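(* Let $G=(V,E)$ be a chordal graph on a non-empty finite vertex set $V$, and let $\{A_v\}_{v\in V}$ be events in a probability space, indexed by the vertices of $G$. Then \[ \Pr\Big(\bigcup_{v\in V} A_v\Big) \;\ge\; \frac{1}{\alpha(G)} \sum_{I\in\mathscr{C}(G)} (-1)^{|I|-1}\,\Pr\Big(\bigcap_{i\in I} A_i\Big), \] and, for every integer $r\ge 1$, \[ \Pr\Big(\bigcup_{v\in V} A_v\Big) \;\ge\; \frac{1}{\alpha(G)} \sum_{\substack{I\in\mathscr{C}(G)\\ |I|\le 2r}} (-1)^{|I|-1}\,\Pr\Big(\bigcap_{i\in I} A_i\Big). \]
   Context: A graph is chordal if it contains no cycle of length four or more as an induced subgraph. Graphs are simple and finite; edges are two-element subsets of $V$. $\mathscr{C}(G)$ denotes the clique complex of $G$: the set of all non-empty subsets $I\subseteq V$ whose elements are pairwise adjacent in $G$. $\alpha(G)$ denotes the independence number of $G$ (maximum size of a set of pairwise non-adjacent vertices). *)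

theory Defs
  imports "HOL-Probability.Probability"
begin

definition simple_graph :: "'a set \<Rightarrow> 'a set set \<Rightarrow> bool" where
  "simple_graph V E \<longleftrightarrow> finite V \<and> (\<forall>e\<in>E. e \<subseteq> V \<and> card e = 2)"

definition adj :: "'a set set \<Rightarrow> 'a \<Rightarrow> 'a \<Rightarrow> bool" where
  "adj E u v \<longleftrightarrow> {u, v} \<in> E"

definition induced_cycle :: "'a set \<Rightarrow> 'a set set \<Rightarrow> 'a list \<Rightarrow> bool" where
  "induced_cycle V E vs \<longleftrightarrow> distinct vs \<and> set vs \<subseteq> V \<and> length vs \<ge> 3 \<and>
     (\<forall>i<length vs. \<forall>j<length vs.
        adj E (vs ! i) (vs ! j) \<longleftrightarrow>
          (j = (i + 1) mod length vs \<or> i = (j + 1) mod length vs))"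

definition chordal :: "'a set \<Rightarrow> 'a set set \<Rightarrow> bool" where
  "chordal V E \<longleftrightarrow> \<not> (\<exists>vs. induced_cycle V E vs \<and> length vs \<ge> 4)"

definition clique_complex :: "'a set \<Rightarrow> 'a set set \<Rightarrow> 'a set set" where
  "clique_complex V E = {I. I \<noteq> {} \<and> I \<subseteq> V \<and> (\<forall>u\<in>I. \<forall>v\<in>I. u \<noteq> v \<longrightarrow> adj E u v)}"

definition independent_set :: "'a set \<Rightarrow> 'a set set \<Rightarrow> 'a set \<Rightarrow> bool" where
  "independent_set V E S \<longleftrightarrow> S \<subseteq> V \<and> (\<forall>u\<in>S. \<forall>v\<in>S. \<not> adj E u v)"

definition independence_number :: "'a set \<Rightarrow> 'a set set \<Rightarrow> nat" where
  "independence_number V E = Max (card ` {S. independent_set V E S})"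

end

theory Submission
  imports Defs
begin

lemma adj_sym: "adj E u v = adj E v u"
  by (simp add: adj_def insert_commute)

lemma adj_irrefl: "simple_graph V E \<Longrightarrow> \<not> adj E u u"
  unfolding adj_def simple_graph_def by force

lemma adj_V: "simple_graph V E \<Longrightarrow> adj E u v \<Longrightarrow> u \<in> V \<and> v \<in> V"
  unfolding adj_def simple_graph_def by blast

lemma mod_helper: "(a::nat) \<le> b \<Longrightarrow> 0 < b \<Longrightarrow> a mod b = (if a = b then 0 else a)"
  by auto

lemma cycle_from_path:
  assumes sg: "simple_graph V E"
    and x: "x \<in> V" and psV: "set ps \<subseteq> V" and xn: "x \<notin> set ps" and d: "distinct ps"
    and l3: "length ps \<ge> 3"
    and chord: "\<forall>i<length ps. \<forall>j<length ps. adj E (ps!i) (ps!j) \<longleftrightarrow> (j = Suc i \<or> i = Suc j)"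
    and apex: "\<forall>k<length ps. adj E x (ps!k) \<longleftrightarrow> (k = 0 \<or> k = length ps - 1)"
  shows "induced_cycle V E (x # ps)"
  unfolding induced_cycle_def
proof (intro conjI allI impI)
  show "distinct (x # ps)" using xn d by simp
  show "set (x # ps) \<subseteq> V" using x psV by simp
  show "3 \<le> length (x # ps)" using l3 by simp
  fix i j assume i: "i < length (x # ps)" and j: "j < length (x # ps)"
  define n where "n = length ps"
  have n3: "n \<ge> 3" using l3 n_def by simp
  show "adj E ((x # ps) ! i) ((x # ps) ! j) =
         (j = (i + 1) mod length (x # ps) \<or> i = (j + 1) mod length (x # ps))"
  proof (cases i)
    case 0
    show ?thesis
    proof (cases j)
      case 0
      then show ?thesis using \<open>i = 0\<close> adj_irrefl[OF sg] n3 n_def by (cases ps) auto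
    next
      case (Suc l)
      have l: "l < n" using j Suc n_def by simp
      have e: "(Suc l + 1) mod Suc n = (if Suc l + 1 = Suc n then 0 else Suc l + 1)"
        using l by (intro mod_helper) auto
      have e1: "1 mod Suc n = 1" using n3 by simp
      show ?thesis using apex l e e1 \<open>i = 0\<close> Suc n_def by auto
    qed
  next
    case (Suc k)
    have k: "k < n" using i Suc n_def by simp
    have ek: "(Suc k + 1) mod Suc n = (if Suc k + 1 = Suc n then 0 else Suc k + 1)"
      using k by (intro mod_helper) auto
    show ?thesis
    proof (cases j)
      case 0
      have e1: "1 mod Suc n = 1" using n3 by simp
      have "adj E (ps ! k) x = adj E x (ps ! k)" by (rule adj_sym)
      then show ?thesis using apex k ek e1 \<open>j = 0\<close> Suc n_def by auto
    next
      case (Suc l)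
      have l: "l < n" using j Suc n_def by simp
      have el: "(Suc l + 1) mod Suc n = (if Suc l + 1 = Suc n then 0 else Suc l + 1)"
        using l by (intro mod_helper) auto
      show ?thesis using chord k l ek el \<open>i = Suc k\<close> Suc n_def by auto
    qed
  qed
qed

definition walkP :: "'a set set \<Rightarrow> 'a \<Rightarrow> 'a \<Rightarrow> 'a set \<Rightarrow> 'a list \<Rightarrow> bool" where
  "walkP E y z U ps \<longleftrightarrow> ps \<noteq> [] \<and> hd ps = y \<and> last ps = z \<and> set ps \<subseteq> U \<and> successively (adj E) ps"

lemma succ_take: "successively P xs \<Longrightarrow> successively P (take n xs)"
  using successively_append_iff[of P "take n xs" "drop n xs"] by simp

lemma succ_drop: "successively P xs \<Longrightarrow> successively P (drop n xs)"
  using successively_append_iff[of P "take n xs" "drop n xs"] by simp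

lemma last_take_Suc: "i < length xs \<Longrightarrow> last (take (Suc i) xs) = xs ! i"
  by (simp add: take_Suc_conv_app_nth)

lemma min_walk:
  assumes sg: "simple_graph V E"
    and w: "walkP E y z U ps" and mn: "\<forall>qs. walkP E y z U qs \<longrightarrow> length ps \<le> length qs"
    and ij: "i < j" "j < length ps"
  shows "ps!i \<noteq> ps!j \<and> (adj E (ps!i) (ps!j) \<longleftrightarrow> j = Suc i)"
proof -
  have ne: "ps \<noteq> []" and hd: "hd ps = y" and la: "last ps = z" and st: "set ps \<subseteq> U"
    and succ: "successively (adj E) ps" using w unfolding walkP_def by auto
  have hdt: "hd (take (Suc i) ps) = y" using ne hd by (cases ps) auto
  have A: "adj E (ps!i) (ps!j) \<Longrightarrow> j = Suc i"
  proof (rule ccontr)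
    assume a: "adj E (ps!i) (ps!j)" and nj: "j \<noteq> Suc i"
    define qs where "qs = take (Suc i) ps @ drop j ps"
    have "walkP E y z U qs" unfolding walkP_def qs_def
    proof (intro conjI)
      show "take (Suc i) ps @ drop j ps \<noteq> []" using ne by simp
      show "hd (take (Suc i) ps @ drop j ps) = y" using hdt ne by (simp add: hd_append)
      show "last (take (Suc i) ps @ drop j ps) = z" using ij la by (simp add: last_drop)
      show "set (take (Suc i) ps @ drop j ps) \<subseteq> U" using st
        by (auto dest: in_set_takeD in_set_dropD)
      show "successively (adj E) (take (Suc i) ps @ drop j ps)"
        unfolding successively_append_iff using succ_take[OF succ] succ_drop[OF succ] a ij
        by (simp add: last_take_Suc hd_drop_conv_nth)
    qed
    moreover have "length qs < length ps" using ij nj unfolding qs_def by simp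
    ultimately show False using mn by fastforce
  qed
  have B: "j = Suc i \<Longrightarrow> adj E (ps!i) (ps!j)" using successively_nth[OF succ] ij by auto
  have C: "ps!i \<noteq> ps!j"
  proof
    assume eq: "ps!i = ps!j"
    show False
    proof (cases "j = Suc i")
      case True then show ?thesis using B eq adj_irrefl[OF sg] by metis
    next
      case nj: False
      define qs where "qs = take (Suc i) ps @ drop (Suc j) ps"
      have "walkP E y z U qs" unfolding walkP_def qs_def
      proof (intro conjI)
        show "take (Suc i) ps @ drop (Suc j) ps \<noteq> []" using ne by simp
        show "hd (take (Suc i) ps @ drop (Suc j) ps) = y" using hdt ne by (simp add: hd_append)
        show "last (take (Suc i) ps @ drop (Suc j) ps) = z"
        proof (cases "Suc j < length ps")
          case True then show ?thesis using la by (simp add: last_drop)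
        next
          case False
          then have "j = length ps - 1" using ij by simp
          then have "ps ! j = z" using la ne by (simp add: last_conv_nth)
          then show ?thesis using False eq ij by (simp add: last_take_Suc)
        qed
        show "set (take (Suc i) ps @ drop (Suc j) ps) \<subseteq> U" using st
          by (auto dest: in_set_takeD in_set_dropD)
        show "successively (adj E) (take (Suc i) ps @ drop (Suc j) ps)"
        proof -
          have "drop (Suc j) ps = [] \<or> adj E (ps ! i) (hd (drop (Suc j) ps))"
          proof (cases "Suc j < length ps")
            case True then show ?thesis using successively_nth[OF succ True] eq by (simp add: hd_drop_conv_nth)
          qed simp
          then show ?thesis
            unfolding successively_append_iff using succ_take[OF succ] succ_drop[OF succ] ij
            by (auto simp add: last_take_Suc hd_drop_conv_nth)
        qed
      qed
      moreover have "length qs < length ps" using ij nj unfolding qs_def by simp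
      ultimately show False using mn by fastforce
    qed
  qed
  show ?thesis using A B C by blast
qed


lemma path_cycle:
  assumes sg: "simple_graph V E" and ch: "chordal V E"
    and x: "x \<in> V" and xy: "adj E x y" and xz: "adj E x z" and yz: "\<not> adj E y z" and ynz: "y \<noteq> z"
    and T: "\<forall>t\<in>T. t \<in> V \<and> t \<noteq> x \<and> \<not> adj E x t"
    and w0: "walkP E y z (insert y (insert z T)) ps0"
  shows False
proof -
  let ?U = "insert y (insert z T)"
  obtain ps where w: "walkP E y z ?U ps" and mn: "\<forall>qs. walkP E y z ?U qs \<longrightarrow> length ps \<le> length qs"
    using ex_has_least_nat[of "walkP E y z ?U" ps0 length] w0 by blast
  have ne: "ps \<noteq> []" and hd: "hd ps = y" and la: "last ps = z" and st: "set ps \<subseteq> ?U"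
    and succ: "successively (adj E) ps" using w unfolding walkP_def by auto
  note mw = min_walk[OF sg w mn]
  have d: "distinct ps"
    unfolding distinct_conv_nth
  proof (intro allI impI)
    fix i j assume "i < length ps" "j < length ps" "i \<noteq> j"
    then show "ps ! i \<noteq> ps ! j" using mw[of i j] mw[of j i] by (cases "i < j") auto
  qed
  have p0: "ps ! 0 = y" using ne hd by (simp add: hd_conv_nth)
  have pl: "ps ! (length ps - 1) = z" using ne la by (simp add: last_conv_nth)
  have l2: "length ps \<ge> 2"
  proof (rule ccontr)
    assume "\<not> length ps \<ge> 2"
    then have "length ps = 1" using ne by (cases ps) (auto simp: not_le)
    then show False using p0 pl ynz by simp
  qed
  have l3: "length ps \<ge> 3"
  proof (rule ccontr)
    assume "\<not> length ps \<ge> 3"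
    then have "length ps = 2" using l2 by simp
    then show False using successively_nth[OF succ, of 0] p0 pl yz by simp
  qed
  have chord: "\<forall>i<length ps. \<forall>j<length ps. adj E (ps!i) (ps!j) \<longleftrightarrow> (j = Suc i \<or> i = Suc j)"
  proof (intro allI impI)
    fix i j assume i: "i < length ps" and j: "j < length ps"
    show "adj E (ps!i) (ps!j) \<longleftrightarrow> (j = Suc i \<or> i = Suc j)"
    proof (cases i j rule: linorder_cases)
      case less then show ?thesis using mw[of i j] j by auto
    next
      case equal then show ?thesis using adj_irrefl[OF sg] by simp
    next
      case greater then show ?thesis using mw[of j i] i adj_sym[of E "ps!i" "ps!j"] by auto
    qed
  qed
  have yV: "y \<in> V" and zV: "z \<in> V" using adj_V[OF sg xy] adj_V[OF sg xz] by auto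
  have apex: "\<forall>k<length ps. adj E x (ps!k) \<longleftrightarrow> (k = 0 \<or> k = length ps - 1)"
  proof (intro allI impI)
    fix k assume k: "k < length ps"
    show "adj E x (ps!k) \<longleftrightarrow> (k = 0 \<or> k = length ps - 1)"
    proof (cases "k = 0 \<or> k = length ps - 1")
      case True then show ?thesis using p0 pl xy xz by auto
    next
      case False
      have "ps ! k \<noteq> y" using d p0 k False l3 by (metis distinct_conv_nth gr_implies_not0 length_greater_0_conv ne)
      moreover have "ps ! k \<noteq> z" using d pl k False
        by (metis diff_less distinct_conv_nth length_greater_0_conv ne zero_less_one)
      moreover have "ps ! k \<in> ?U" using st k nth_mem by blast
      ultimately have "ps ! k \<in> T" by simp
      then show ?thesis using T False by auto
    qed
  qed
  have psV: "set ps \<subseteq> V" using st T yV zV by auto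
  have xn: "x \<notin> set ps"
  proof
    assume "x \<in> set ps"
    then have "x \<in> ?U" using st by auto
    then show False using T adj_irrefl[OF sg] xy xz by auto
  qed
  have "induced_cycle V E (x # ps)"
    by (rule cycle_from_path[OF sg x psV xn d l3 chord apex])
  moreover have "length (x # ps) \<ge> 4" using l3 by simp
  ultimately show False using ch unfolding chordal_def by blast
qed

lemma walk_rev: "walkP E a b U p \<Longrightarrow> walkP E b a U (rev p)"
  unfolding walkP_def
  by (auto simp: hd_rev last_rev successively_rev adj_sym[of E] intro: successively_mono[of "adj E"])

lemma walk_app: "walkP E a b U p \<Longrightarrow> walkP E b c U q \<Longrightarrow> walkP E a c U (p @ tl q)"
  unfolding walkP_def
proof (elim conjE, intro conjI)
  assume p: "p \<noteq> []" "hd p = a" "last p = b" "set p \<subseteq> U" "successively (adj E) p"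
    and q: "q \<noteq> []" "hd q = b" "last q = c" "set q \<subseteq> U" "successively (adj E) q"
  obtain q' where qq: "q = b # q'" using q by (cases q) auto
  show "p @ tl q \<noteq> []" using p by simp
  show "hd (p @ tl q) = a" using p by simp
  show "last (p @ tl q) = c" using p q qq by auto
  show "set (p @ tl q) \<subseteq> U" using p q qq by auto
  show "successively (adj E) (p @ tl q)"
    using p q qq by (auto simp: successively_append_iff successively_Cons)
qed

lemma walk_mono: "walkP E a b U p \<Longrightarrow> U \<subseteq> U' \<Longrightarrow> walkP E a b U' p"
  unfolding walkP_def by auto

lemma walk2: "adj E a b \<Longrightarrow> a \<in> U \<Longrightarrow> b \<in> U \<Longrightarrow> walkP E a b U [a, b]"
  unfolding walkP_def by auto


definition simplicial :: "'a set set \<Rightarrow> 'a set \<Rightarrow> 'a \<Rightarrow> bool" where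
  "simplicial E W s \<longleftrightarrow> (\<forall>a\<in>W. \<forall>b\<in>W. adj E s a \<longrightarrow> adj E s b \<longrightarrow> a \<noteq> b \<longrightarrow> adj E a b)"

lemma simplicial_aux:
  assumes sg: "simple_graph V E" and ch: "chordal V E"
  shows "\<forall>W x. W \<subseteq> V \<longrightarrow> card W = n \<longrightarrow> x \<in> W \<longrightarrow> (\<exists>u\<in>W. u \<noteq> x \<and> \<not> adj E x u) \<longrightarrow>
           (\<exists>s\<in>W. s \<noteq> x \<and> \<not> adj E x s \<and> simplicial E W s)"
proof (induction n rule: less_induct)
  case (less n)
  show ?case
  proof (intro allI impI)
    fix W x assume WV: "W \<subseteq> V" and cW: "card W = n" and xW: "x \<in> W"
      and ex: "\<exists>u\<in>W. u \<noteq> x \<and> \<not> adj E x u"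
    have finV: "finite V" using sg unfolding simple_graph_def by auto
    have finW: "finite W" using WV finV finite_subset by auto
    obtain u where uW: "u \<in> W" and ux: "u \<noteq> x" and nxu: "\<not> adj E x u" using ex by blast
    define T where "T = {w\<in>W. w \<noteq> x \<and> \<not> adj E x w}"
    define C where "C = {w. \<exists>ps. walkP E u w T ps}"
    define S where "S = {w\<in>W. adj E x w \<and> (\<exists>c\<in>C. adj E w c)}"
    have uT: "u \<in> T" using uW ux nxu T_def by auto
    have CT: "C \<subseteq> T"
    proof
      fix w assume "w \<in> C"
      then obtain ps where "walkP E u w T ps" using C_def by auto
      then show "w \<in> T" unfolding walkP_def by (metis last_in_set subsetD)
    qed
    have uC: "u \<in> C" unfolding C_def using uT by (auto intro!: exI[of _ "[u]"] simp: walkP_def)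
    have Cclos: "w \<in> C" if cc: "c \<in> C" "w \<in> T" "adj E c w" for c w
    proof -
      obtain ps where p: "walkP E u c T ps" using cc(1) unfolding C_def by blast
      have "walkP E c w T [c, w]" using cc CT by (intro walk2) auto
      from walk_app[OF p this] show ?thesis using C_def by auto
    qed
    have Sclique: "adj E y z" if yzS: "y \<in> S" "z \<in> S" "y \<noteq> z" for y z
    proof (rule ccontr)
      assume nyz: "\<not> adj E y z"
      obtain c1 where c1: "c1 \<in> C" "adj E y c1" using yzS S_def by auto
      obtain c2 where c2: "c2 \<in> C" "adj E z c2" using yzS S_def by auto
      obtain p1 where p1: "walkP E u c1 T p1" using c1 C_def by auto
      obtain p2 where p2: "walkP E u c2 T p2" using c2 C_def by auto
      let ?U = "insert y (insert z T)"
      have w1: "walkP E y c1 ?U [y, c1]" using walk2[of E y c1] c1 CT by auto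
      have w2: "walkP E c1 u ?U (rev p1)" by (rule walk_mono[OF walk_rev[OF p1]]) auto
      have w3: "walkP E u c2 ?U p2" by (rule walk_mono[OF p2]) auto
      have w4: "walkP E c2 z ?U [c2, z]" using walk2[of E c2 z] c2 CT adj_sym[of E z c2] by auto
      have w: "walkP E y z ?U ([y, c1] @ tl (rev p1) @ tl p2 @ tl [c2, z])"
        using walk_app[OF walk_app[OF walk_app[OF w1 w2] w3] w4] by simp
      have xV: "x \<in> V" using xW WV by auto
      show False
        by (rule path_cycle[OF sg ch xV _ _ nyz \<open>y \<noteq> z\<close> _ w])
           (use yzS S_def T_def WV in auto)
    qed
    define H where "H = C \<union> S"
    have HW: "H \<subseteq> W" using CT T_def S_def H_def by auto
    have xH: "x \<notin> H" using CT T_def S_def H_def adj_irrefl[OF sg] by auto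
    have cH: "card H < n" using cW HW xH xW finW by (metis psubsetI psubset_card_mono)
    have nbr: "w \<in> H" if "s \<in> C" "w \<in> W" "adj E s w" for s w
    proof -
      have sT: "s \<in> T" using that CT by auto
      have "w \<noteq> x" using sT T_def that adj_sym[of E s w] by auto
      show ?thesis
      proof (cases "adj E x w")
        case True then show ?thesis using that S_def H_def adj_sym[of E w s] by auto
      next
        case False
        then have "w \<in> T" using \<open>w \<noteq> x\<close> that T_def by auto
        then show ?thesis using Cclos that H_def by auto
      qed
    qed
    have lift: "simplicial E W s" if "s \<in> C" "simplicial E H s" for s
      unfolding simplicial_def
    proof (intro ballI impI)
      fix a b assume "a \<in> W" "b \<in> W" "adj E s a" "adj E s b" "a \<noteq> b"
      then show "adj E a b" using nbr[OF \<open>s \<in> C\<close>] that(2) unfolding simplicial_def by blast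
    qed
    have "\<exists>s\<in>C. simplicial E H s"
    proof (cases "\<forall>a\<in>H. \<forall>b\<in>H. a \<noteq> b \<longrightarrow> adj E a b")
      case True
      then have "simplicial E H u" unfolding simplicial_def by blast
      then show ?thesis using uC by blast
    next
      case False
      then obtain a b where ab: "a \<in> H" "b \<in> H" "a \<noteq> b" "\<not> adj E a b" by blast
      obtain x' where x'H: "x' \<in> H" and x'ex: "\<exists>v\<in>H. v \<noteq> x' \<and> \<not> adj E x' v"
        and x'S: "\<forall>w\<in>S. w = x' \<or> adj E x' w"
      proof (cases "\<exists>s'\<in>S. \<exists>v\<in>H. v \<noteq> s' \<and> \<not> adj E s' v")
        case True
        then obtain s' where s'S: "s' \<in> S" and s'ex: "\<exists>v\<in>H. v \<noteq> s' \<and> \<not> adj E s' v" by blast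
        have s'S2: "\<forall>w\<in>S. w = s' \<or> adj E s' w" using Sclique s'S by blast
        have s'H: "s' \<in> H" using s'S H_def by simp
        show ?thesis by (rule that[OF s'H s'ex s'S2])
      next
        case False
        then have univ: "\<forall>s'\<in>S. \<forall>v\<in>H. v \<noteq> s' \<longrightarrow> adj E s' v" by blast
        have aS: "\<forall>w\<in>S. w = a \<or> adj E a w"
        proof
          fix w assume "w \<in> S"
          then have "w \<noteq> a \<longrightarrow> adj E w a" using univ ab(1) by simp
          moreover have "adj E a w = adj E w a" by (rule adj_sym)
          ultimately show "w = a \<or> adj E a w" by (cases "w = a") auto
        qed
        have aex: "\<exists>v\<in>H. v \<noteq> a \<and> \<not> adj E a v" using ab by (intro bexI[of _ b]) auto
        show ?thesis by (rule that[OF ab(1) aex aS])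
      qed
      have "x' \<in> H \<longrightarrow> H \<subseteq> V \<longrightarrow> card H = card H \<longrightarrow> (\<exists>u\<in>H. u \<noteq> x' \<and> \<not> adj E x' u) \<longrightarrow>
           (\<exists>s\<in>H. s \<noteq> x' \<and> \<not> adj E x' s \<and> simplicial E H s)"
        using less.IH[OF cH] by blast
      then obtain s where s: "s \<in> H" "s \<noteq> x'" "\<not> adj E x' s" "simplicial E H s"
        using x'H x'ex HW WV by blast
      have "s \<notin> S" using s x'S by blast
      then have "s \<in> C" using s H_def by auto
      then show ?thesis using s by blast
    qed
    then obtain s where "s \<in> C" "simplicial E H s" by blast
    moreover have "s \<in> T" using \<open>s \<in> C\<close> CT by auto
    ultimately show "\<exists>s\<in>W. s \<noteq> x \<and> \<not> adj E x s \<and> simplicial E W s"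
      using lift T_def by blast
  qed
qed

lemma simplicial_exists:
  assumes sg: "simple_graph V E" and ch: "chordal V E" and WV: "W \<subseteq> V" and ne: "W \<noteq> {}"
  shows "\<exists>s\<in>W. simplicial E W s"
proof (cases "\<forall>a\<in>W. \<forall>b\<in>W. a \<noteq> b \<longrightarrow> adj E a b")
  case True
  then show ?thesis using ne unfolding simplicial_def by blast
next
  case False
  then obtain a b where "a \<in> W" "b \<in> W" "a \<noteq> b" "\<not> adj E a b" by blast
  then have "\<exists>u\<in>W. u \<noteq> a \<and> \<not> adj E a u" by (intro bexI[of _ b]) auto
  then show ?thesis using simplicial_aux[OF sg ch, of "card W"] WV \<open>a \<in> W\<close> by blast
qed


lemma alt_sum: "(\<Sum>i\<le>k. (-1::real)^i * of_nat (Suc e choose i)) = (-1)^k * of_nat (e choose k)"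
proof (induction k)
  case 0 then show ?case by simp
next
  case (Suc k)
  have "(\<Sum>i\<le>Suc k. (-1::real)^i * of_nat (Suc e choose i))
      = (-1)^k * of_nat (e choose k) + (-1)^Suc k * (of_nat (e choose k) + of_nat (e choose Suc k))"
    using Suc by simp
  also have "\<dots> = (-1)^Suc k * of_nat (e choose Suc k)" by (simp add: algebra_simps)
  finally show ?case .
qed

definition gsum :: "'a set \<Rightarrow> nat \<Rightarrow> real" where
  "gsum N k = (\<Sum>J\<in>{J. J \<subseteq> N \<and> card J \<le> k}. (-1::real)^card J)"

lemma gsum_eq:
  assumes fin: "finite N"
  shows "gsum N k = (\<Sum>j\<le>k. (-1::real)^j * of_nat (card N choose j))"
proof -
  let ?S = "{J. J \<subseteq> N \<and> card J \<le> k}"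
  have finS: "finite ?S" using fin by (rule finite_subset[rotated, OF finite_Pow_iff[THEN iffD2]]) auto
  have "gsum N k = (\<Sum>j\<in>{..k}. \<Sum>J\<in>{x. x \<in> ?S \<and> card x = j}. (-1::real)^card J)"
    unfolding gsum_def by (rule sum.group[symmetric, OF finS]) auto
  also have "\<dots> = (\<Sum>j\<le>k. (-1::real)^j * of_nat (card N choose j))"
  proof (rule sum.cong[OF refl])
    fix j assume "j \<in> {..k}"
    then have eq: "{x. x \<in> ?S \<and> card x = j} = {J. J \<subseteq> N \<and> card J = j}" by auto
    have "(\<Sum>J\<in>{J. J \<subseteq> N \<and> card J = j}. (-1::real)^card J) = (\<Sum>J\<in>{J. J \<subseteq> N \<and> card J = j}. (-1::real)^j)"
      by (rule sum.cong) auto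
    also have "\<dots> = of_nat (card N choose j) * (-1)^j" using n_subsets[OF fin, of j] by simp
    finally show "(\<Sum>J\<in>{x. x \<in> ?S \<and> card x = j}. (-1::real)^card J) = (-1)^j * of_nat (card N choose j)"
      unfolding eq by simp
  qed
  finally show ?thesis .
qed

lemma gsum_nonpos:
  assumes "finite N" "N \<noteq> {}" "odd k"
  shows "gsum N k \<le> 0"
proof -
  obtain e where e: "card N = Suc e" using assms by (metis card_gt_0_iff gr0_implies_Suc)
  have "gsum N k = (-1)^k * of_nat (e choose k)" using gsum_eq[OF assms(1)] e alt_sum by simp
  also have "\<dots> = - of_nat (e choose k)" using assms(3) by simp
  finally show ?thesis by simp
qed

lemma gsum_empty: "gsum {} k = 1"
proof -
  have e: "{J. J \<subseteq> {} \<and> card J \<le> k} = {{}}" by auto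
  show ?thesis unfolding gsum_def e by simp
qed

definition csum :: "'a set \<Rightarrow> 'a set set \<Rightarrow> nat \<Rightarrow> 'a set \<Rightarrow> real" where
  "csum V E m W = (\<Sum>I\<in>{I\<in>clique_complex V E. I \<subseteq> W \<and> card I \<le> m}. (-1::real)^(card I - 1))"

lemma finite_cc: "simple_graph V E \<Longrightarrow> finite (clique_complex V E)"
  unfolding simple_graph_def clique_complex_def
  by (rule finite_subset[of _ "Pow V"]) auto

lemma csum_empty: "csum V E m {} = 0"
proof -
  have "{I\<in>clique_complex V E. I \<subseteq> {} \<and> card I \<le> m} = {}" unfolding clique_complex_def by auto
  then show ?thesis unfolding csum_def by simp
qed

lemma csum_step:
  assumes sg: "simple_graph V E" and WV: "W \<subseteq> V" and sW: "s \<in> W" and simp: "simplicial E W s"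
    and m1: "m \<ge> 1"
  shows "csum V E m W = csum V E m (W - {s}) + gsum {w\<in>W. adj E s w} (m - 1)"
proof -
  define N where "N = {w\<in>W. adj E s w}"
  define X1 where "X1 = {I\<in>clique_complex V E. I \<subseteq> W - {s} \<and> card I \<le> m}"
  define X2 where "X2 = {I\<in>clique_complex V E. I \<subseteq> W \<and> card I \<le> m \<and> s \<in> I}"
  define Y where "Y = {J. J \<subseteq> N \<and> card J \<le> m - 1}"
  have finV: "finite V" using sg unfolding simple_graph_def by auto
  have fcc: "finite (clique_complex V E)" by (rule finite_cc[OF sg])
  have XX: "{I\<in>clique_complex V E. I \<subseteq> W \<and> card I \<le> m} = X1 \<union> X2"
    unfolding X1_def X2_def by auto
  have f1: "finite X1" unfolding X1_def using fcc by auto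
  have f2: "finite X2" unfolding X2_def using fcc by auto
  have dj: "X1 \<inter> X2 = {}" unfolding X1_def X2_def by auto
  have sN: "s \<notin> N" unfolding N_def using adj_irrefl[OF sg] by auto
  have NV: "N \<subseteq> V" unfolding N_def using WV by auto
  have X2Y: "X2 = insert s ` Y"
  proof
    show "X2 \<subseteq> insert s ` Y"
    proof
      fix I assume I: "I \<in> X2"
      then have Icc: "I \<in> clique_complex V E" and IW: "I \<subseteq> W" and cI: "card I \<le> m" and sI: "s \<in> I"
        unfolding X2_def by auto
      have finI: "finite I" using finite_subset[OF subset_trans[OF IW WV] finV] .
      have "I - {s} \<subseteq> N"
      proof
        fix w assume "w \<in> I - {s}"
        then show "w \<in> N" using Icc sI IW unfolding clique_complex_def N_def by auto
      qed
      moreover have "card (I - {s}) \<le> m - 1" using cI sI finI by simp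
      ultimately have "I - {s} \<in> Y" unfolding Y_def by auto
      moreover have "I = insert s (I - {s})" using sI by auto
      ultimately show "I \<in> insert s ` Y" by blast
    qed
  next
    show "insert s ` Y \<subseteq> X2"
    proof
      fix I assume "I \<in> insert s ` Y"
      then obtain J where J: "J \<subseteq> N" "card J \<le> m - 1" and IJ: "I = insert s J" unfolding Y_def by auto
      have finJ: "finite J" using finite_subset[OF subset_trans[OF J(1) NV] finV] .
      have sJ: "s \<notin> J" using J sN by auto
      have JW: "J \<subseteq> W" using J N_def by auto
      have cl: "\<forall>u\<in>I. \<forall>v\<in>I. u \<noteq> v \<longrightarrow> adj E u v"
      proof (intro ballI impI)
        fix u v assume u: "u \<in> I" and v: "v \<in> I" and uv: "u \<noteq> v"
        show "adj E u v"
        proof (cases "u = s")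
          case True
          then have "v \<in> N" using v uv IJ J by auto
          then show ?thesis using True N_def by auto
        next
          case False
          then have uN: "u \<in> N" using u IJ J by auto
          show ?thesis
          proof (cases "v = s")
            case True then show ?thesis using uN N_def adj_sym[of E s u] by auto
          next
            case False
            then have "v \<in> N" using v IJ J by auto
            then show ?thesis using uN simp uv unfolding simplicial_def N_def by auto
          qed
        qed
      qed
      have "card I \<le> m" using IJ finJ sJ J m1 by simp
      then show "I \<in> X2" unfolding X2_def clique_complex_def using cl IJ JW sW WV by auto
    qed
  qed
  have inj: "inj_on (insert s) Y"
  proof (rule inj_onI)
    fix A B assume "A \<in> Y" "B \<in> Y" "insert s A = insert s B"
    moreover have "s \<notin> A" "s \<notin> B" using \<open>A \<in> Y\<close> \<open>B \<in> Y\<close> sN unfolding Y_def by auto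
    ultimately show "A = B" by (metis Diff_insert_absorb)
  qed
  have "(\<Sum>I\<in>X2. (-1::real)^(card I - 1)) = (\<Sum>J\<in>Y. (-1::real)^(card (insert s J) - 1))"
    unfolding X2Y by (rule sum.reindex[OF inj, unfolded comp_def])
  also have "\<dots> = (\<Sum>J\<in>Y. (-1::real)^(card J))"
  proof (rule sum.cong[OF refl])
    fix J assume "J \<in> Y"
    then have JN: "J \<subseteq> N" unfolding Y_def by auto
    have "finite J" using finite_subset[OF subset_trans[OF JN NV] finV] .
    moreover have "s \<notin> J" using JN sN by auto
    ultimately show "(-1::real)^(card (insert s J) - 1) = (-1)^card J" by simp
  qed
  finally have e2: "(\<Sum>I\<in>X2. (-1::real)^(card I - 1)) = gsum N (m - 1)"
    unfolding gsum_def Y_def .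
  show ?thesis
    unfolding csum_def XX sum.union_disjoint[OF f1 f2 dj] e2[folded N_def] X1_def[symmetric]
    using N_def by simp
qed

lemma csum_bound:
  assumes sg: "simple_graph V E" and ch: "chordal V E" and ev: "even m" and m2: "m \<ge> 2"
  shows "\<forall>W. W \<subseteq> V \<longrightarrow> card W = n \<longrightarrow>
           (\<exists>S. S \<subseteq> W \<and> independent_set V E S \<and> csum V E m W \<le> real (card S))"
proof (induction n rule: less_induct)
  case (less n)
  show ?case
  proof (intro allI impI)
    fix W assume WV: "W \<subseteq> V" and cW: "card W = n"
    have finV: "finite V" using sg unfolding simple_graph_def by auto
    have finW: "finite W" using WV finV finite_subset by auto
    show "\<exists>S. S \<subseteq> W \<and> independent_set V E S \<and> csum V E m W \<le> real (card S)"
    proof (cases "W = {}")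
      case True
      then show ?thesis using csum_empty[of V E m] unfolding independent_set_def
        by (intro exI[of _ "{}"]) auto
    next
      case False
      obtain s where sW: "s \<in> W" and ss: "simplicial E W s"
        using simplicial_exists[OF sg ch WV False] by blast
      have lt: "card (W - {s}) < n" using card_Diff1_less[OF finW sW] cW by simp
      have sub: "W - {s} \<subseteq> V" using WV by auto
      have "\<exists>S. S \<subseteq> W - {s} \<and> independent_set V E S \<and> csum V E m (W - {s}) \<le> real (card S)"
        using less.IH[OF lt, rule_format, OF sub refl] .
      then obtain S' where S'W: "S' \<subseteq> W - {s}" and S'i: "independent_set V E S'"
        and S'c: "csum V E m (W - {s}) \<le> real (card S')"
        by blast
      have step: "csum V E m W = csum V E m (W - {s}) + gsum {w\<in>W. adj E s w} (m - 1)"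
        by (rule csum_step[OF sg WV sW ss]) (use m2 in simp)
      show ?thesis
      proof (cases "{w\<in>W. adj E s w} = {}")
        case True
        have iso: "\<not> adj E s w" if "w \<in> W" for w using True that by auto
        have finS': "finite S'" using S'W finW finite_subset by blast
        have sS': "s \<notin> S'" using S'W by auto
        have ind: "independent_set V E (insert s S')"
          unfolding independent_set_def
        proof (intro conjI ballI)
          show "insert s S' \<subseteq> V" using S'i sW WV unfolding independent_set_def by auto
          fix u v assume u: "u \<in> insert s S'" and v: "v \<in> insert s S'"
          show "\<not> adj E u v"
          proof (cases "u = s")
            case True
            then show ?thesis using v iso S'W adj_irrefl[OF sg] by auto
          next
            case False
            then have uS: "u \<in> S'" using u by auto
            show ?thesis
            proof (cases "v = s")
              case True
              then show ?thesis using iso uS S'W adj_sym[of E u s] by auto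
            next
              case False
              then show ?thesis using v uS S'i unfolding independent_set_def by auto
            qed
          qed
        qed
        have "csum V E m W = csum V E m (W - {s}) + 1" using step True gsum_empty by simp
        also have "\<dots> \<le> real (card (insert s S'))" using S'c finS' sS' by simp
        finally show ?thesis using ind S'W sW by (intro exI[of _ "insert s S'"]) auto
      next
        case False
        have "finite {w\<in>W. adj E s w}" using finW by auto
        moreover have "odd (m - 1)" using ev m2 by simp
        ultimately have "gsum {w\<in>W. adj E s w} (m - 1) \<le> 0" using False gsum_nonpos by blast
        then have "csum V E m W \<le> real (card S')" using step S'c by simp
        then show ?thesis using S'W S'i by (intro exI[of _ S']) auto
      qed
    qed
  qed
qed

lemma indep_le: "simple_graph V E \<Longrightarrow> independent_set V E S \<Longrightarrow> card S \<le> independence_number V E"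
  unfolding independence_number_def
proof (rule Max_ge)
  assume sg: "simple_graph V E" and "independent_set V E S"
  have "finite V" using sg unfolding simple_graph_def by auto
  then have "finite {S. independent_set V E S}"
    by (rule finite_subset[rotated, OF finite_Pow_iff[THEN iffD2]]) (auto simp: independent_set_def)
  then show "finite (card ` {S. independent_set V E S})" by simp
  show "card S \<in> card ` {S. independent_set V E S}" using \<open>independent_set V E S\<close> by simp
qed


lemma main_ineq:
  assumes sg: "simple_graph V E" and ch: "chordal V E" and P: "prob_space M"
    and A: "\<And>v. v \<in> V \<Longrightarrow> A v \<in> sets M" and ev: "even m" and m2: "m \<ge> 2"
  shows "(\<Sum>I\<in>{I\<in>clique_complex V E. card I \<le> m}. (-1) ^ (card I - 1) * measure M (\<Inter>i\<in>I. A i))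
         \<le> real (independence_number V E) * measure M (\<Union>v\<in>V. A v)"
proof -
  interpret prob_space M by (rule P)
  define X where "X = {I\<in>clique_complex V E. card I \<le> m}"
  define \<alpha> where "\<alpha> = real (independence_number V E)"
  have finV: "finite V" using sg unfolding simple_graph_def by auto
  have finX: "finite X" unfolding X_def using finite_cc[OF sg] by auto
  have XI: "I \<noteq> {} \<and> I \<subseteq> V \<and> finite I" if "I \<in> X" for I
    using that finV finite_subset unfolding X_def clique_complex_def by blast
  have Imeas: "(\<Inter>i\<in>I. A i) \<in> sets M" if "I \<in> X" for I
    using XI[OF that] A by (intro sets.finite_INT) auto
  have Umeas: "(\<Union>v\<in>V. A v) \<in> sets M"
    using finV A by (intro sets.finite_UN) auto
  have intg: "integrable M (indicator B :: 'b \<Rightarrow> real)" if "B \<in> sets M" for B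
    using that by (intro integrable_real_indicator) (auto simp: less_top[symmetric])
  have intI: "(\<integral>x. (indicator (\<Inter>i\<in>I. A i) x :: real) \<partial>M) = measure M (\<Inter>i\<in>I. A i)" if "I \<in> X" for I
    using Imeas[OF that] by (simp add: sets.Int_space_eq2)
  have intU: "(\<integral>x. (indicator (\<Union>v\<in>V. A v) x :: real) \<partial>M) = measure M (\<Union>v\<in>V. A v)"
    using Umeas by (simp add: sets.Int_space_eq2)
  have L: "(\<Sum>I\<in>X. (-1) ^ (card I - 1) * measure M (\<Inter>i\<in>I. A i))
      = (\<integral>x. (\<Sum>I\<in>X. (-1) ^ (card I - 1) * indicator (\<Inter>i\<in>I. A i) x) \<partial>M)"
  proof -
    have "(\<integral>x. (\<Sum>I\<in>X. (-1) ^ (card I - 1) * (indicator (\<Inter>i\<in>I. A i) x :: real)) \<partial>M)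
        = (\<Sum>I\<in>X. (\<integral>x. (-1) ^ (card I - 1) * indicator (\<Inter>i\<in>I. A i) x \<partial>M))"
    proof (rule Bochner_Integration.integral_sum[where M=M and I=X and f="\<lambda>I x. (-1) ^ (card I - 1) * indicator (\<Inter>i\<in>I. A i) x :: real"])
      fix I assume "I \<in> X"
      then show "integrable M (\<lambda>x. (-1) ^ (card I - 1) * indicator (\<Inter>i\<in>I. A i) x :: real)"
        using intg[OF Imeas] by (intro integrable_mult_right) auto
    qed
    also have "\<dots> = (\<Sum>I\<in>X. (-1) ^ (card I - 1) * measure M (\<Inter>i\<in>I. A i))"
      by (rule sum.cong[OF refl]) (auto simp add: intI Imeas sets.Int_space_eq2)
    finally show ?thesis by simp
  qed
  have R: "\<alpha> * measure M (\<Union>v\<in>V. A v) = (\<integral>x. \<alpha> * indicator (\<Union>v\<in>V. A v) x \<partial>M)"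
    using intU by simp
  have pw: "(\<Sum>I\<in>X. (-1) ^ (card I - 1) * indicator (\<Inter>i\<in>I. A i) x) \<le> \<alpha> * indicator (\<Union>v\<in>V. A v) x"
    for x
  proof -
    define Sx where "Sx = {v\<in>V. x \<in> A v}"
    have "(\<Sum>I\<in>X. (-1) ^ (card I - 1) * indicator (\<Inter>i\<in>I. A i) x)
        = (\<Sum>I\<in>X. if I \<subseteq> Sx then (-1::real) ^ (card I - 1) else 0)"
    proof (rule sum.cong[OF refl])
      fix I assume "I \<in> X"
      then have "I \<subseteq> V" using XI by auto
      then show "(-1) ^ (card I - 1) * indicator (\<Inter>i\<in>I. A i) x
          = (if I \<subseteq> Sx then (-1::real) ^ (card I - 1) else 0)"
        unfolding Sx_def indicator_def by auto
    qed
    also have "\<dots> = (\<Sum>I\<in>{I\<in>X. I \<subseteq> Sx}. (-1::real) ^ (card I - 1))"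
      by (rule sum.inter_filter[OF finX, symmetric])
    also have "\<dots> = csum V E m Sx"
      unfolding csum_def X_def by (rule sum.cong) auto
    finally have eq: "(\<Sum>I\<in>X. (-1) ^ (card I - 1) * indicator (\<Inter>i\<in>I. A i) x) = csum V E m Sx" .
    have SxV: "Sx \<subseteq> V" unfolding Sx_def by auto
    obtain S where S: "S \<subseteq> Sx" "independent_set V E S" "csum V E m Sx \<le> real (card S)"
      using csum_bound[OF sg ch ev m2, rule_format, OF SxV refl] by blast
    have cS: "real (card S) \<le> \<alpha>" unfolding \<alpha>_def using indep_le[OF sg S(2)] by simp
    show ?thesis
    proof (cases "Sx = {}")
      case True
      then have "csum V E m Sx \<le> 0" using S by simp
      moreover have "0 \<le> \<alpha>" unfolding \<alpha>_def by simp
      then have "0 \<le> \<alpha> * (indicator (\<Union>v\<in>V. A v) x :: real)" by (simp add: indicator_def)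
      ultimately show ?thesis using eq by linarith
    next
      case False
      then have "x \<in> (\<Union>v\<in>V. A v)" unfolding Sx_def by auto
      then show ?thesis using eq S(3) cS by simp
    qed
  qed
  have "(\<integral>x. (\<Sum>I\<in>X. (-1) ^ (card I - 1) * indicator (\<Inter>i\<in>I. A i) x) \<partial>M)
      \<le> (\<integral>x. \<alpha> * indicator (\<Union>v\<in>V. A v) x \<partial>M)"
  proof (rule integral_mono)
    show "integrable M (\<lambda>x. \<Sum>I\<in>X. (-1) ^ (card I - 1) * indicator (\<Inter>i\<in>I. A i) x :: real)"
      using intg Imeas by (intro Bochner_Integration.integrable_sum integrable_mult_right) auto
    show "integrable M (\<lambda>x. \<alpha> * indicator (\<Union>v\<in>V. A v) x :: real)"
      using intg Umeas by (intro integrable_mult_right) auto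
    show "\<And>x. x \<in> space M \<Longrightarrow> (\<Sum>I\<in>X. (-1) ^ (card I - 1) * indicator (\<Inter>i\<in>I. A i) x)
          \<le> \<alpha> * indicator (\<Union>v\<in>V. A v) x" using pw by blast
  qed
  then have "(\<Sum>I\<in>X. (-1) ^ (card I - 1) * measure M (\<Inter>i\<in>I. A i)) \<le> \<alpha> * measure M (\<Union>v\<in>V. A v)"
    using L R by linarith
  then show ?thesis unfolding X_def \<alpha>_def .
qed

theorem theorem1:
  fixes V :: "'a set" and E :: "'a set set"
    and M :: "'b measure" and A :: "'a \<Rightarrow> 'b set"
  assumes "simple_graph V E" and "V \<noteq> {}" and "chordal V E"
    and "prob_space M" and "\<And>v. v \<in> V \<Longrightarrow> A v \<in> sets M"
  shows "measure M (\<Union>v\<in>V. A v) \<ge>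
           (1 / real (independence_number V E)) *
             (\<Sum>I\<in>clique_complex V E. (-1) ^ (card I - 1) * measure M (\<Inter>i\<in>I. A i)) \<and>
         (\<forall>r::nat. r \<ge> 1 \<longrightarrow> measure M (\<Union>v\<in>V. A v) \<ge>
           (1 / real (independence_number V E)) *
             (\<Sum>I\<in>{I\<in>clique_complex V E. card I \<le> 2 * r}.
                (-1) ^ (card I - 1) * measure M (\<Inter>i\<in>I. A i)))"
proof -
  note sg = assms(1) and ch = assms(3)
  have finV: "finite V" using sg unfolding simple_graph_def by auto
  obtain v where v: "v \<in> V" using assms(2) by blast
  have "independent_set V E {v}" unfolding independent_set_def using v adj_irrefl[OF sg] by auto
  then have "1 \<le> independence_number V E" using indep_le[OF sg] by fastforce
  then have apos: "0 < real (independence_number V E)" by simp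
  have conv: "(1 / real (independence_number V E)) * s \<le> measure M (\<Union>v\<in>V. A v)"
    if "s \<le> real (independence_number V E) * measure M (\<Union>v\<in>V. A v)" for s
    using that apos by (simp add: divide_le_eq mult.commute)
  have cV: "card V \<ge> 1" using finV assms(2) by (simp add: Suc_le_eq card_gt_0_iff)
  have eqCC: "{I\<in>clique_complex V E. card I \<le> 2 * card V} = clique_complex V E"
  proof -
    have "card I \<le> 2 * card V" if "I \<in> clique_complex V E" for I
    proof -
      have "I \<subseteq> V" using that unfolding clique_complex_def by auto
      then have "card I \<le> card V" using finV by (rule card_mono[rotated])
      then show ?thesis by simp
    qed
    then show ?thesis by auto
  qed
  have part1: "(\<Sum>I\<in>clique_complex V E. (-1) ^ (card I - 1) * measure M (\<Inter>i\<in>I. A i))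
      \<le> real (independence_number V E) * measure M (\<Union>v\<in>V. A v)"
    using main_ineq[OF sg ch assms(4) assms(5), where m = "2 * card V"] cV unfolding eqCC by simp
  show ?thesis
  proof (intro conjI allI impI)
    show "(1 / real (independence_number V E)) *
             (\<Sum>I\<in>clique_complex V E. (-1) ^ (card I - 1) * measure M (\<Inter>i\<in>I. A i))
          \<le> measure M (\<Union>v\<in>V. A v)" by (rule conv[OF part1])
    fix r :: nat assume "r \<ge> 1"
    then show "(1 / real (independence_number V E)) *
             (\<Sum>I\<in>{I\<in>clique_complex V E. card I \<le> 2 * r}.
                (-1) ^ (card I - 1) * measure M (\<Inter>i\<in>I. A i))
          \<le> measure M (\<Union>v\<in>V. A v)"
      using main_ineq[OF sg ch assms(4) assms(5), where m = "2 * r"] by (intro conv) simp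
  qed
qed

end
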